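(* Let $G$ be a connected threshold graph of order $n\ge 4$ and size $m$ with $n-1<m<\binom{n}{2}$, with $c$ type 1 vertices, backwards zero position sequence $(b_1,\ldots,b_z)$, $F_1=\sum_{i=1}^z b_i^2$, and lazy walk counts $\mathrm{LW}_k$ as in the context. Define $(\mathrm{LW}''_k)_{k\in\mathbb{N}_0}$ by $\mathrm{LW}''_0=1$ and \[\mathrm{LW}''_k=c\,\mathrm{LW}''_{k-1}+\sum_{r=0}^{k-3}\mathrm{LW}''_r\sum_{q\in\mathbb{N}_0}\binom{k-3-r-q}{q}F_1\Big(\sum_{i=1}^z b_i\Big)^q\qquad(k\in\mathbb{N}).\] Then $\mathrm{LW}''_k\ge \mathrm{LW}_k$ for every $k\in\mathbb{N}_0$.
   Context: A threshold graph is a simple graph whose vertices can be ordered $v_1,\ldots,v_n$ so that for each $2\le i\le n$, $v_i$ is either adjacent to all of $v_1,\ldots,v_{i-1}$ (then $a_i=1$) or to none of them (then $a_i=0$); by convention $a_1=1$. Vertex $v_i$ is of type 1 if $a_i=1$ and of type 0 if $a_i=0$; $c$ and $z$ are the numbers of type 1 and type 0 vertices. The backwards zero position sequence $(b_1,\ldots,b_z)$ is defined by letting $b_i$ be the number of type 1 vertices appearing after the $i$-th type 0 vertex in the order $v_1,\ldots,v_n$. A lazy walk of length $k\in\mathbb{N}_0$ is a sequence $u_0u_1\cdots u_k$ of vertices such that for each $1\le i\le k$, $u_i=u_{i-1}$ or $u_i$ is adjacent to $u_{i-1}$. For $k\in\mathbb{N}$, $\mathrm{LW}_k$ is the number of lazy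 walks of length $k-1$ in $G$ whose first and last vertices are both type 1 vertices, and $\mathrm{LW}_0=1$. Binomial coefficients $\binom{a}{q}$ with integer $a$ and $q\in\mathbb{N}_0$ are taken to be $0$ whenever $a<q$. *)

theory Defs
  imports Main
begin

text \<open>A threshold graph is represented by its creation sequence a = [a_1,...,a_n]
  (a list of booleans, True = type 1), with vertices v_1..v_n encoded as 0..n-1.
  For i < j, v_i and v_j are adjacent iff a_j = 1.\<close>

definition th_adj :: "bool list \<Rightarrow> nat \<Rightarrow> nat \<Rightarrow> bool" where
  "th_adj a i j \<longleftrightarrow> i \<noteq> j \<and> i < length a \<and> j < length a \<and> a ! (max i j)"

definition th_connected :: "bool list \<Rightarrow> bool" where
  "th_connected a \<longleftrightarrow> (\<forall>i < length a. \<forall>j < length a. (th_adj a)\<^sup>*\<^sup>* i j)"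

definition th_size :: "bool list \<Rightarrow> nat" where
  "th_size a = card {(i, j). i < j \<and> th_adj a i j}"

definition num_type1 :: "bool list \<Rightarrow> nat" where
  "num_type1 a = length (filter id a)"

definition bzps :: "bool list \<Rightarrow> nat list" where
  "bzps a = [length (filter id (drop (Suc p) a)). p \<leftarrow> [0..<length a], \<not> a ! p]"

definition lazy_walks :: "bool list \<Rightarrow> nat \<Rightarrow> nat list set" where
  "lazy_walks a len = {w. length w = Suc len \<and> set w \<subseteq> {..<length a} \<and>
      (\<forall>i < len. w ! Suc i = w ! i \<or> th_adj a (w ! i) (w ! Suc i))}"

definition LW :: "bool list \<Rightarrow> nat \<Rightarrow> nat" where
  "LW a k = (if k = 0 then 1 else
     card {w \<in> lazy_walks a (k - 1). a ! (hd w) \<and> a ! (last w)})"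

text \<open>LW''_k with parameters c, F1 and B = sum of the b_i. The inner sum over q is
  restricted to q \<le> k-3-r, outside of which the binomial coefficient vanishes.\<close>
fun LWpp :: "nat \<Rightarrow> nat \<Rightarrow> nat \<Rightarrow> nat \<Rightarrow> nat" where
  "LWpp c F B 0 = 1"
| "LWpp c F B (Suc k) = c * LWpp c F B k +
     (\<Sum>r < Suc k. if r + 3 \<le> Suc k then
        LWpp c F B r * (\<Sum>q \<le> Suc k - 3 - r. ((Suc k - 3 - r - q) choose q) * F * B ^ q)
      else 0)"

end

theory Submission
  imports Defs
begin

definition Qs :: "nat \<Rightarrow> nat \<Rightarrow> nat" where "Qs B m = (\<Sum>q\<le>m. ((m - q) choose q) * B^q)"

lemma Qs_rec: "Qs B (Suc (Suc m)) = Qs B (Suc m) + B * Qs B m"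
proof -
  have e1: "Qs B (Suc (Suc m)) = 1 + (\<Sum>q\<le>Suc m. ((Suc m - q) choose Suc q) * B^Suc q)"
    unfolding Qs_def by (subst sum.atMost_Suc_shift) simp
  have pas: "((Suc m - q) choose Suc q) = ((m - q) choose q) + ((m-q) choose Suc q)" if "q \<le> Suc m" for q
  proof (cases "q \<le> m")
    case True then have "Suc m - q = Suc (m - q)" by simp
    then show ?thesis by simp
  next
    case False then have "q = Suc m" using that by simp
    then show ?thesis by simp
  qed
  have e2: "(\<Sum>q\<le>Suc m. ((Suc m - q) choose Suc q) * B^Suc q)
     = B * (\<Sum>q\<le>Suc m. ((m - q) choose q) * B^q) + (\<Sum>q\<le>Suc m. ((m - q) choose Suc q) * B^Suc q)"
    by (simp add: pas sum.distrib sum_distrib_left algebra_simps)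
  have e3: "(\<Sum>q\<le>Suc m. ((m - q) choose q) * B^q) = Qs B m"
    unfolding Qs_def by simp
  have e4: "1 + (\<Sum>q\<le>Suc m. ((m - q) choose Suc q) * B^Suc q) = Qs B (Suc m)"
    unfolding Qs_def by (subst sum.atMost_Suc_shift) simp
  show ?thesis using e1 e2 e3 e4 by simp
qed

lemma Qs0: "Qs B 0 = 1" and Qs1: "Qs B (Suc 0) = 1" by (simp_all add: Qs_def)

definition Ss :: "nat \<Rightarrow> nat \<Rightarrow> nat \<Rightarrow> nat \<Rightarrow> nat" where
  "Ss c F B j = (\<Sum>r<j. LWpp c F B r * Qs B (j - 1 - r))"

lemma LWpp_Suc: "LWpp c F B (Suc (Suc (Suc j))) = c * LWpp c F B (Suc (Suc j)) + F * Ss c F B (Suc j)"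
proof -
  have inner: "(\<Sum>q \<le> M. ((M - q) choose q) * F * B ^ q) = F * Qs B M" for M
    by (simp add: Qs_def sum_distrib_left mult_ac)
  have "(\<Sum>r < Suc (Suc (Suc j)). if r + 3 \<le> Suc (Suc (Suc j)) then
        LWpp c F B r * (\<Sum>q \<le> Suc (Suc (Suc j)) - 3 - r. ((Suc (Suc (Suc j)) - 3 - r - q) choose q) * F * B ^ q)
      else 0) = (\<Sum>r < Suc j. LWpp c F B r * (F * Qs B (j - r)))"
    apply (simp only: inner)
    apply (simp add: Qs0)
    done
  also have "\<dots> = F * Ss c F B (Suc j)" unfolding Ss_def by (simp add: sum_distrib_left algebra_simps)
  finally show ?thesis by (simp only: LWpp.simps)
qed

lemma LWpp_1: "LWpp c F B (Suc 0) = c" by simp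
lemma LWpp_2: "LWpp c F B (Suc (Suc 0)) = c * c" by simp

lemma Ss_rec: "Ss c F B (Suc (Suc j)) = Ss c F B (Suc j) + B * Ss c F B j + LWpp c F B (Suc j)"
proof -
  let ?x = "LWpp c F B"
  have a: "Ss c F B (Suc (Suc j)) = (\<Sum>r<j. ?x r * Qs B (Suc j - r)) + ?x j + ?x (Suc j)"
    by (simp add: Ss_def Qs0 Qs1)
  have b: "Ss c F B (Suc j) = (\<Sum>r<j. ?x r * Qs B (j - r)) + ?x j"
    by (simp add: Ss_def Qs0)
  have c: "Qs B (Suc j - r) = Qs B (j - r) + B * Qs B (j - 1 - r)" if "r < j" for r
  proof -
    have "Suc j - r = Suc (Suc (j - 1 - r))" "j - r = Suc (j - 1 - r)" using that by auto
    then show ?thesis by (simp add: Qs_rec)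
  qed
  have "(\<Sum>r<j. ?x r * Qs B (Suc j - r)) = (\<Sum>r<j. ?x r * Qs B (j - r)) + B * Ss c F B j"
    by (simp add: c Ss_def sum.distrib sum_distrib_left algebra_simps)
  then show ?thesis using a b by simp
qed

lemma abstract_bound:
  fixes L G :: "nat \<Rightarrow> nat"
  assumes L0: "L 0 \<le> c" and G0: "G 0 = 0" and G1: "G 1 \<le> F"
    and LS: "\<And>k. L (Suc k) \<le> c * L k + G k"
    and GS: "\<And>j. G (Suc (Suc j)) \<le> G (Suc j) + F * L j + B * G j"
  shows "L k \<le> LWpp c F B (Suc k)"
proof -
  let ?P = "\<lambda>k. L k \<le> LWpp c F B (Suc k) \<and> G k \<le> F * Ss c F B k"
  have "?P k \<and> ?P (Suc k)" for k
  proof (induction k)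
    case 0
    have "L 1 \<le> c * L 0 + G 0" using LS[of 0] by simp
    also have "\<dots> \<le> c * c" using L0 G0 by simp
    finally show ?case using L0 G0 G1 by (simp add: Ss_def Qs0)
  next
    case (Suc k)
    have g: "G (Suc (Suc k)) \<le> F * Ss c F B (Suc (Suc k))"
    proof -
      have "G (Suc (Suc k)) \<le> G (Suc k) + F * L k + B * G k" by (rule GS)
      also have "\<dots> \<le> F * Ss c F B (Suc k) + F * LWpp c F B (Suc k) + B * (F * Ss c F B k)"
        using Suc.IH by (intro add_mono mult_left_mono) auto
      also have "\<dots> = F * Ss c F B (Suc (Suc k))" by (simp add: Ss_rec algebra_simps)
      finally show ?thesis .
    qed
    have "L (Suc (Suc k)) \<le> c * L (Suc k) + G (Suc k)" by (rule LS)
    also have "\<dots> \<le> c * LWpp c F B (Suc (Suc k)) + F * Ss c F B (Suc k)"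
      using Suc.IH by (intro add_mono mult_left_mono) auto
    also have "\<dots> = LWpp c F B (Suc (Suc (Suc k)))" by (simp only: LWpp_Suc)
    finally show ?case using g Suc.IH by simp
  qed
  then show ?thesis by simp
qed


definition Sw :: "bool list \<Rightarrow> nat \<Rightarrow> nat \<Rightarrow> nat list set" where
  "Sw a k v = {w. length w = Suc k \<and> set w \<subseteq> {..<length a} \<and>
      (\<forall>i < k. w ! Suc i = w ! i \<or> th_adj a (w ! i) (w ! Suc i)) \<and> a ! (hd w) \<and> last w = v}"

definition Fw :: "bool list \<Rightarrow> nat \<Rightarrow> nat \<Rightarrow> nat" where "Fw a k v = card (Sw a k v)"

lemma Sw_finite: "finite (Sw a k v)"
proof -
  have "Sw a k v \<subseteq> {w. set w \<subseteq> {..<length a} \<and> length w = Suc k}" unfolding Sw_def by auto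
  moreover have "finite {w. set w \<subseteq> {..<length a} \<and> length w = Suc k}"
    by (rule finite_lists_length_eq) simp
  ultimately show ?thesis by (rule finite_subset)
qed

lemma adj_sym: "th_adj a u v = th_adj a v u"
  unfolding th_adj_def by (auto simp: max.commute)

lemma Fw0: "Fw a 0 v \<le> (if a ! v then 1 else 0)"
proof -
  have s: "Sw a 0 v \<subseteq> (if a ! v then {[v]} else {})"
    unfolding Sw_def by (auto simp: length_Suc_conv)
  show ?thesis
  proof (cases "a ! v")
    case True
    then have "card (Sw a 0 v) \<le> card {[v]}" using s by (intro card_mono) auto
    then show ?thesis using True unfolding Fw_def by simp
  next
    case False
    then show ?thesis using s unfolding Fw_def by simp
  qed
qed

lemma FwS: "Fw a (Suc k) v \<le> (\<Sum>u<length a. if u = v \<or> th_adj a u v then Fw a k u else 0)"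
proof -
  let ?N = "{u. u < length a \<and> (u = v \<or> th_adj a u v)}"
  have sub: "Sw a (Suc k) v \<subseteq> (\<Union>u\<in>?N. (\<lambda>w. w @ [v]) ` Sw a k u)"
  proof
    fix w assume w: "w \<in> Sw a (Suc k) v"
    then have "w \<noteq> []" unfolding Sw_def by auto
    then obtain w' x where wx: "w = w' @ [x]" by (metis rev_exhaust)
    have lw': "length w' = Suc k" using w wx unfolding Sw_def by auto
    then have ne: "w' \<noteq> []" by auto
    have xv: "x = v" using w wx unfolding Sw_def by auto
    have step: "\<forall>i < Suc k. w ! Suc i = w ! i \<or> th_adj a (w ! i) (w ! Suc i)"
      using w unfolding Sw_def by auto
    have sw: "set w \<subseteq> {..<length a}" using w unfolding Sw_def by auto
    have hd: "a ! hd w" using w unfolding Sw_def by auto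
    let ?u = "last w'"
    have "w' \<in> Sw a k ?u"
      unfolding Sw_def
    proof (intro CollectI conjI allI impI)
      show "length w' = Suc k" by fact
      show "set w' \<subseteq> {..<length a}" using sw wx by auto
      show "a ! hd w'" using hd wx ne by simp
      show "last w' = last w'" by simp
      fix i assume i: "i < k"
      show "w' ! Suc i = w' ! i \<or> th_adj a (w' ! i) (w' ! Suc i)"
        using step[rule_format, of i] i lw' wx by (simp add: nth_append)
    qed
    moreover have "?u \<in> ?N"
    proof -
      have "?u \<in> set w'" using ne by simp
      then have "?u < length a" using sw wx by auto
      moreover have "w ! k = ?u" using wx lw' ne by (simp add: nth_append last_conv_nth)
      moreover have "w ! Suc k = v" using wx lw' xv by (simp add: nth_append)
      ultimately show ?thesis using step[rule_format, of k] by (auto simp: adj_sym)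
    qed
    ultimately show "w \<in> (\<Union>u\<in>?N. (\<lambda>w. w @ [v]) ` Sw a k u)" using wx xv by blast
  qed
  have "Fw a (Suc k) v \<le> card (\<Union>u\<in>?N. (\<lambda>w. w @ [v]) ` Sw a k u)"
    unfolding Fw_def by (rule card_mono[OF _ sub]) (auto simp: Sw_finite)
  also have "\<dots> \<le> (\<Sum>u\<in>?N. card ((\<lambda>w. w @ [v]) ` Sw a k u))"
    by (rule card_UN_le) simp
  also have "\<dots> \<le> (\<Sum>u\<in>?N. Fw a k u)"
    unfolding Fw_def by (intro sum_mono card_image_le Sw_finite)
  also have "\<dots> = (\<Sum>u<length a. if u = v \<or> th_adj a u v then Fw a k u else 0)"
    by (subst sum.inter_filter[symmetric]) (auto intro: sum.cong)
  finally show ?thesis .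
qed



definition Lw :: "bool list \<Rightarrow> nat \<Rightarrow> nat" where
  "Lw a k = (\<Sum>t<length a. if a ! t then Fw a k t else 0)"
definition dg :: "bool list \<Rightarrow> nat \<Rightarrow> nat" where
  "dg a z = card {t. t < length a \<and> a ! t \<and> th_adj a t z}"
definition Gw :: "bool list \<Rightarrow> nat \<Rightarrow> nat" where
  "Gw a k = (\<Sum>z<length a. if a ! z then 0 else dg a z * Fw a k z)"
definition cc :: "bool list \<Rightarrow> nat" where
  "cc a = card {t. t < length a \<and> a ! t}"
definition F1 :: "bool list \<Rightarrow> nat" where
  "F1 a = (\<Sum>z<length a. if a ! z then 0 else dg a z ^ 2)"
definition BB :: "bool list \<Rightarrow> nat" where
  "BB a = (\<Sum>z<length a. if a ! z then 0 else dg a z)"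

lemma sum_if_const: "finite A \<Longrightarrow> (\<Sum>t\<in>A. if P t then x else 0) = card {t\<in>A. P t} * (x::nat)"
  by (simp add: sum.If_cases Int_def)

lemma FwT: assumes "a ! t"
  shows "Fw a (Suc k) t \<le> Lw a k + (\<Sum>z<length a. if \<not> a ! z \<and> th_adj a z t then Fw a k z else 0)"
proof -
  have "Fw a (Suc k) t \<le> (\<Sum>u<length a. if u = t \<or> th_adj a u t then Fw a k u else 0)" by (rule FwS)
  also have "\<dots> \<le> (\<Sum>u<length a. (if a ! u then Fw a k u else 0) + (if \<not> a ! u \<and> th_adj a u t then Fw a k u else 0))"
    by (rule sum_mono) (use assms in auto)
  also have "\<dots> = Lw a k + (\<Sum>z<length a. if \<not> a ! z \<and> th_adj a z t then Fw a k z else 0)"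
    by (simp add: sum.distrib Lw_def)
  finally show ?thesis .
qed

lemma adj_Z: assumes "\<not> a ! z" "th_adj a u z" shows "a ! u"
  using assms unfolding th_adj_def by (auto simp: max_def split: if_splits)

lemma FwZ: assumes "\<not> a ! z"
  shows "Fw a (Suc k) z \<le> Fw a k z + (\<Sum>t<length a. if a ! t \<and> th_adj a t z then Fw a k t else 0)"
proof -
  have "Fw a (Suc k) z \<le> (\<Sum>u<length a. if u = z \<or> th_adj a u z then Fw a k u else 0)" by (rule FwS)
  also have "\<dots> \<le> (\<Sum>u<length a. (if u = z then Fw a k u else 0) + (if a ! u \<and> th_adj a u z then Fw a k u else 0))"
    by (rule sum_mono) (use assms adj_Z in auto)
  also have "\<dots> \<le> Fw a k z + (\<Sum>t<length a. if a ! t \<and> th_adj a t z then Fw a k t else 0)"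
    by (simp add: sum.distrib)
  finally show ?thesis .
qed

lemma Fw0Z: "\<not> a ! z \<Longrightarrow> Fw a 0 z = 0"
  using Fw0[of a z] by simp

lemma Gw0: "Gw a 0 = 0"
  unfolding Gw_def by (simp add: Fw0Z)

lemma Lw0: "Lw a 0 \<le> cc a"
proof -
  have "Lw a 0 \<le> (\<Sum>t<length a. if a ! t then 1 else 0)"
    unfolding Lw_def apply (rule sum_mono) subgoal for t using Fw0[of a t] by auto done
  also have "\<dots> = cc a" by (simp add: sum_if_const cc_def)
  finally show ?thesis .
qed

lemma LwS: "Lw a (Suc k) \<le> cc a * Lw a k + Gw a k"
proof -
  let ?n = "length a"
  have "Lw a (Suc k) \<le> (\<Sum>t<?n. if a ! t then Lw a k + (\<Sum>z<?n. if \<not> a ! z \<and> th_adj a z t then Fw a k z else 0) else 0)"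
    unfolding Lw_def[of a "Suc k"] by (rule sum_mono) (use FwT in auto)
  also have "\<dots> = (\<Sum>t<?n. (if a ! t then Lw a k else 0) + (\<Sum>z<?n. if a ! t \<and> \<not> a ! z \<and> th_adj a z t then Fw a k z else 0))"
    by (rule sum.cong[OF refl]) simp
  also have "\<dots> = (\<Sum>t<?n. if a ! t then Lw a k else 0) + (\<Sum>t<?n. \<Sum>z<?n. if a ! t \<and> \<not> a ! z \<and> th_adj a z t then Fw a k z else 0)"
    by (rule sum.distrib)
  also have "(\<Sum>t<?n. \<Sum>z<?n. if a ! t \<and> \<not> a ! z \<and> th_adj a z t then Fw a k z else 0)
      = (\<Sum>z<?n. \<Sum>t<?n. if a ! t \<and> \<not> a ! z \<and> th_adj a z t then Fw a k z else 0)"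
    by (rule sum.swap)
  also have "\<dots> = Gw a k"
    unfolding Gw_def
  proof (rule sum.cong[OF refl])
    fix z
    have "(\<Sum>t<?n. if a ! t \<and> \<not> a ! z \<and> th_adj a z t then Fw a k z else 0)
       = card {t \<in> {..<?n}. a ! t \<and> \<not> a ! z \<and> th_adj a z t} * Fw a k z" by (simp add: sum_if_const)
    also have "\<dots> = (if a ! z then 0 else dg a z * Fw a k z)"
      unfolding dg_def by (auto simp: adj_sym intro!: arg_cong[where f=card])
    finally show "(\<Sum>t<?n. if a ! t \<and> \<not> a ! z \<and> th_adj a z t then Fw a k z else 0) = (if a ! z then 0 else dg a z * Fw a k z)" .
  qed
  also have "(\<Sum>t<?n. if a ! t then Lw a k else 0) = cc a * Lw a k"
    by (simp add: sum_if_const cc_def)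
  finally show ?thesis by simp
qed



lemma dg_alt: "card {t \<in> {..<length a}. a ! t \<and> th_adj a t z} = dg a z"
  unfolding dg_def by (auto intro!: arg_cong[where f=card])

lemma GwS: "Gw a (Suc m) \<le> Gw a m + (\<Sum>z<length a. if a ! z then 0 else dg a z * (\<Sum>t<length a. if a ! t \<and> th_adj a t z then Fw a m t else 0))"
proof -
  have "Gw a (Suc m) \<le> (\<Sum>z<length a. (if a ! z then 0 else dg a z * Fw a m z) + (if a ! z then 0 else dg a z * (\<Sum>t<length a. if a ! t \<and> th_adj a t z then Fw a m t else 0)))"
    unfolding Gw_def apply (rule sum_mono) subgoal for z using FwZ[of a z m]
      by (auto simp: distrib_left[symmetric] intro: mult_left_mono) done
  then show ?thesis by (simp add: sum.distrib Gw_def)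
qed

lemma Gw1: "Gw a (Suc 0) \<le> F1 a"
proof -
  have "Gw a (Suc 0) \<le> (\<Sum>z<length a. if a ! z then 0 else dg a z * (\<Sum>t<length a. if a ! t \<and> th_adj a t z then Fw a 0 t else 0))"
    using GwS[of a 0] by (simp add: Gw0)
  also have "\<dots> \<le> (\<Sum>z<length a. if a ! z then 0 else dg a z * (\<Sum>t<length a. if a ! t \<and> th_adj a t z then 1 else 0))"
    apply (rule sum_mono) apply (simp add: mult_left_mono)
    apply (intro impI mult_left_mono sum_mono) subgoal for z t using Fw0[of a t] by auto done
  also have "\<dots> = F1 a"
    unfolding F1_def by (rule sum.cong[OF refl]) (simp add: sum_if_const dg_def power2_eq_square)
  finally show ?thesis .
qed

lemma triple:
  "(\<Sum>z<length a. if a ! z then 0 else dg a z * (\<Sum>t<length a. if a ! t \<and> th_adj a t z then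
       (\<Sum>z'<length a. if \<not> a ! z' \<and> th_adj a z' t then Fw a j z' else 0) else 0)) \<le> BB a * Gw a j"
  (is "?X \<le> _")
proof -
  let ?n = "length a"
  let ?f = "\<lambda>z t z'. if \<not> a ! z \<and> a ! t \<and> th_adj a t z \<and> \<not> a ! z' \<and> th_adj a z' t then dg a z * Fw a j z' else 0"
  let ?g = "\<lambda>z t z'. if \<not> a ! z \<and> a ! t \<and> \<not> a ! z' \<and> th_adj a z' t then dg a z * Fw a j z' else 0"
  have "?X = (\<Sum>z<?n. \<Sum>t<?n. \<Sum>z'<?n. ?f z t z')"
    by (rule sum.cong[OF refl]) (auto simp: sum_distrib_left intro!: sum.cong)
  also have "\<dots> \<le> (\<Sum>z<?n. \<Sum>t<?n. \<Sum>z'<?n. ?g z t z')"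
    by (intro sum_mono) auto
  also have "\<dots> = (\<Sum>t<?n. \<Sum>z<?n. \<Sum>z'<?n. ?g z t z')" by (rule sum.swap)
  also have "\<dots> = (\<Sum>t<?n. \<Sum>z'<?n. \<Sum>z<?n. ?g z t z')" by (rule sum.cong[OF refl], rule sum.swap)
  also have "\<dots> = (\<Sum>z'<?n. \<Sum>t<?n. \<Sum>z<?n. ?g z t z')" by (rule sum.swap)
  also have "\<dots> = (\<Sum>z'<?n. \<Sum>t<?n. if a ! t \<and> \<not> a ! z' \<and> th_adj a z' t then BB a * Fw a j z' else 0)"
    by (intro sum.cong refl) (auto simp: BB_def sum_distrib_right intro!: sum.cong)
  also have "\<dots> = (\<Sum>z'<?n. if a ! z' then 0 else BB a * (dg a z' * Fw a j z'))"
  proof (rule sum.cong[OF refl])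
    fix z'
    have "(\<Sum>t<?n. if a ! t \<and> \<not> a ! z' \<and> th_adj a z' t then BB a * Fw a j z' else 0)
      = card {t \<in> {..<?n}. a ! t \<and> \<not> a ! z' \<and> th_adj a z' t} * (BB a * Fw a j z')"
      by (simp add: sum_if_const)
    also have "\<dots> = (if a ! z' then 0 else BB a * (dg a z' * Fw a j z'))"
      using dg_alt[of a z'] by (auto simp: adj_sym)
    finally show "(\<Sum>t<?n. if a ! t \<and> \<not> a ! z' \<and> th_adj a z' t then BB a * Fw a j z' else 0) = (if a ! z' then 0 else BB a * (dg a z' * Fw a j z'))" .
  qed
  also have "\<dots> = BB a * Gw a j"
    unfolding Gw_def sum_distrib_left by (intro sum.cong refl) simp
  finally show ?thesis .
qed



lemma GwSS: "Gw a (Suc (Suc j)) \<le> Gw a (Suc j) + F1 a * Lw a j + BB a * Gw a j"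
proof -
  let ?n = "length a"
  let ?Y = "\<lambda>t. (\<Sum>z'<length a. if \<not> a ! z' \<and> th_adj a z' t then Fw a j z' else 0)"
  have inner: "(\<Sum>t<?n. if a ! t \<and> th_adj a t z then Fw a (Suc j) t else 0)
     \<le> dg a z * Lw a j + (\<Sum>t<?n. if a ! t \<and> th_adj a t z then ?Y t else 0)" for z
  proof -
    have "(\<Sum>t<?n. if a ! t \<and> th_adj a t z then Fw a (Suc j) t else 0)
      \<le> (\<Sum>t<?n. (if a ! t \<and> th_adj a t z then Lw a j else 0) + (if a ! t \<and> th_adj a t z then ?Y t else 0))"
      apply (rule sum_mono) subgoal for t using FwT[of a t j] by auto done
    also have "\<dots> = dg a z * Lw a j + (\<Sum>t<?n. if a ! t \<and> th_adj a t z then ?Y t else 0)"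
      by (simp add: sum.distrib sum_if_const dg_def)
    finally show ?thesis .
  qed
  have "Gw a (Suc (Suc j)) \<le> Gw a (Suc j) + (\<Sum>z<?n. if a ! z then 0 else dg a z * (\<Sum>t<?n. if a ! t \<and> th_adj a t z then Fw a (Suc j) t else 0))"
    by (rule GwS)
  also have "(\<Sum>z<?n. if a ! z then 0 else dg a z * (\<Sum>t<?n. if a ! t \<and> th_adj a t z then Fw a (Suc j) t else 0))
     \<le> (\<Sum>z<?n. (if a ! z then 0 else dg a z ^ 2 * Lw a j) + (if a ! z then 0 else dg a z * (\<Sum>t<?n. if a ! t \<and> th_adj a t z then ?Y t else 0)))"
    apply (rule sum_mono) subgoal for z using mult_left_mono[OF inner[of z], of "dg a z"]
      by (auto simp: power2_eq_square algebra_simps) done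
  also have "\<dots> = F1 a * Lw a j + (\<Sum>z<?n. if a ! z then 0 else dg a z * (\<Sum>t<?n. if a ! t \<and> th_adj a t z then ?Y t else 0))"
  proof -
    have "(\<Sum>z<?n. if a ! z then 0 else dg a z ^ 2 * Lw a j) = F1 a * Lw a j"
      unfolding F1_def sum_distrib_right by (intro sum.cong refl) simp
    then show ?thesis by (simp only: sum.distrib)
  qed
  also have "\<dots> \<le> F1 a * Lw a j + BB a * Gw a j"
    using triple[of a j] by simp
  finally show ?thesis by simp
qed

lemma sum_list_comp: "sum_list (map h [g p. p \<leftarrow> [0..<m], \<not> a ! p]) = (\<Sum>p<m. if a ! p then 0 else h (g p))"
  by (induction m) auto

lemma dg_bz: assumes "p < length a" "\<not> a ! p"
  shows "length (filter id (drop (Suc p) a)) = dg a p"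
proof -
  let ?n = "length a"
  have "length (filter id (drop (Suc p) a)) = card {i. i < ?n - Suc p \<and> a ! (Suc p + i)}"
    using assms by (simp add: length_filter_conv_card nth_drop)
  also have "\<dots> = card ((\<lambda>i. Suc p + i) ` {i. i < ?n - Suc p \<and> a ! (Suc p + i)})"
    by (rule card_image[symmetric]) (simp add: inj_on_def)
  also have "(\<lambda>i. Suc p + i) ` {i. i < ?n - Suc p \<and> a ! (Suc p + i)} = {t. t < ?n \<and> a ! t \<and> th_adj a t p}"
  proof (intro set_eqI iffI)
    fix t assume "t \<in> (\<lambda>i. Suc p + i) ` {i. i < ?n - Suc p \<and> a ! (Suc p + i)}"
    then show "t \<in> {t. t < ?n \<and> a ! t \<and> th_adj a t p}" using assms by (auto simp: th_adj_def)
  next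
    fix t assume t: "t \<in> {t. t < ?n \<and> a ! t \<and> th_adj a t p}"
    then have "p < t" using assms unfolding th_adj_def by (auto simp: max_def split: if_splits)
    then show "t \<in> (\<lambda>i. Suc p + i) ` {i. i < ?n - Suc p \<and> a ! (Suc p + i)}"
      using t by (auto intro!: image_eqI[of _ _ "t - Suc p"])
  qed
  finally show ?thesis unfolding dg_def .
qed

lemma BB_eq: "sum_list (bzps a) = BB a"
proof -
  have "sum_list (bzps a) = (\<Sum>p<length a. if a ! p then 0 else length (filter id (drop (Suc p) a)))"
    using sum_list_comp[where h="\<lambda>x. x" and g="\<lambda>p. length (filter id (drop (Suc p) a))" and m="length a" and a=a] unfolding bzps_def by simp
  also have "\<dots> = BB a" unfolding BB_def by (intro sum.cong refl) (simp add: dg_bz)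
  finally show ?thesis .
qed

lemma F1_eq: "(\<Sum>b \<leftarrow> bzps a. b ^ 2) = F1 a"
proof -
  have "(\<Sum>b \<leftarrow> bzps a. b ^ 2) = (\<Sum>p<length a. if a ! p then 0 else (length (filter id (drop (Suc p) a)))^2)"
    unfolding bzps_def sum_list_comp by simp
  also have "\<dots> = F1 a" unfolding F1_def by (intro sum.cong refl) (simp add: dg_bz)
  finally show ?thesis .
qed

lemma cc_eq: "num_type1 a = cc a"
  unfolding num_type1_def cc_def by (simp add: length_filter_conv_card)

lemma LW_Lw: "LW a (Suc k) \<le> Lw a k"
proof -
  let ?A = "{w \<in> lazy_walks a k. a ! (hd w) \<and> a ! (last w)}"
  let ?T = "{t. t < length a \<and> a ! t}"
  have "?A \<subseteq> (\<Union>t\<in>?T. Sw a k t)"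
  proof
    fix w assume w: "w \<in> ?A"
    then have "w \<noteq> []" unfolding lazy_walks_def by auto
    then have "last w \<in> set w" by simp
    then have "last w < length a" using w unfolding lazy_walks_def by auto
    then show "w \<in> (\<Union>t\<in>?T. Sw a k t)" using w unfolding lazy_walks_def Sw_def by auto
  qed
  then have "card ?A \<le> card (\<Union>t\<in>?T. Sw a k t)"
    by (rule card_mono[rotated]) (auto simp: Sw_finite)
  also have "\<dots> \<le> (\<Sum>t\<in>?T. Fw a k t)" unfolding Fw_def by (rule card_UN_le) simp
  also have "\<dots> = Lw a k" unfolding Lw_def by (subst sum.inter_filter[symmetric]) (auto intro: sum.cong)
  finally show ?thesis unfolding LW_def by simp
qed

theorem lemma5p2:
  fixes a :: "bool list" and k :: nat
  assumes "length a \<ge> 4"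
    and "a ! 0"
    and "th_connected a"
    and "length a - 1 < th_size a"
    and "th_size a < length a choose 2"
  shows "LWpp (num_type1 a) (\<Sum>b \<leftarrow> bzps a. b ^ 2) (sum_list (bzps a)) k \<ge> LW a k"
proof (cases k)
  case 0 then show ?thesis by (simp add: LW_def)
next
  case (Suc j)
  have "Lw a j \<le> LWpp (cc a) (F1 a) (BB a) (Suc j)"
    by (rule abstract_bound[where G = "Gw a"]) (auto simp: Lw0 Gw0 Gw1 LwS GwSS)
  then show ?thesis using LW_Lw[of a j] Suc by (simp add: cc_eq F1_eq BB_eq)
qed


end
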